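(* Let $\mathcal X$ be a countable space with the discrete metric and $\mathcal Y$ a Polish space. If a sequence $\{\mu_n\}_{n\in\mathbb N}$ of probability measures on $\mathcal X\times\mathcal Y$ converges to a probability measure $\mu$ in total variation norm, i.e. $\|\mu_n-\mu\|_{TV}\to0$ where $\|\nu\|_{TV}=\sup\{\int f\,d\nu: f:\mathcal X\times\mathcal Y\to[-1,1]\text{ Borel}\}$, then $\mu_n\to\mu$ in $\wp_I(\mathcal X\times\mathcal Y)$.
   Context: For a Polish space $\mathcal S$, $\wp(\mathcal S)$ denotes the Borel probability measures and $\wp_w(\mathcal S)$ this set with the weak-* topology (weakest topology making $\mu\mapsto\int g\,d\mu$ continuous for all bounded continuous $g$). For $\mu\in\wp(\mathcal X\times\mathcal Y)$, $\mu^{\mathcal X}$ is the marginal and $\mu(\cdot\mid x)$ a regular conditional distribution on $\mathcal Y$ given $x$. Let $\psi(\mu)\in\wp(\mathcal X\times\wp_w(\mathcal Y))$ be $\psi(\mu)(dx,d\zeta)=\delta_{\mu(\cdot\mid x)}(d\zeta)\mu^{\mathcal X}(dx)$. The topology of information on $\wp(\mathcal X\times\mathcal Y)$ is the coarsest topology making $\psi$ continuous into $\wp_w(\mathcal X\times\wp_w(\mathcal Y))$; $\wp_I(\mathcal X\times\mathcal Y)$ denotes $\wp(\mathcal X\times\mathcal Y)$ with it. *)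

theory Defs
  imports "HOL-Probability.Probability"
begin

definition borel_of :: "'a topology \<Rightarrow> 'a measure" where
  "borel_of T = sigma (topspace T) {U. openin T U}"

definition prob_measures :: "'b::topological_space measure set" where
  "prob_measures = {M. prob_space M \<and> sets M = sets (borel :: 'b measure)}"

definition weak_topology :: "'b::topological_space measure topology" where
  "weak_topology = topology_generated_by
     (insert prob_measures
       {{M \<in> prob_measures. (\<integral>y. g y \<partial>M) \<in> U} | g U.
          continuous_on UNIV g \<and> bounded (range g) \<and> open (U :: real set)})"

definition XY_space :: "('a::countable \<times> 'b::polish_space) measure" where
  "XY_space = count_space UNIV \<Otimes>\<^sub>M borel"

definition marginal :: "('a::countable \<times> 'b) measure \<Rightarrow> 'a measure" where
  "marginal \<mu> = distr \<mu> (count_space UNIV) fst"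

definition is_rcd :: "('a::countable \<times> 'b::polish_space) measure \<Rightarrow> ('a \<Rightarrow> 'b measure) \<Rightarrow> bool" where
  "is_rcd \<mu> \<kappa> \<longleftrightarrow> (\<forall>x. \<kappa> x \<in> prob_measures) \<and>
     (\<forall>A B. B \<in> sets borel \<longrightarrow>
        measure \<mu> (A \<times> B) = (\<integral>x. indicator A x * measure (\<kappa> x) B \<partial>marginal \<mu>))"

definition XP_topology :: "('a \<times> 'b::topological_space measure) topology" where
  "XP_topology = prod_topology (discrete_topology UNIV) weak_topology"

text \<open>psi(mu) = delta_{mu(.|x)}(d zeta) mu^X(dx), a measure on X \<times> P_w(Y).\<close>
definition psi :: "('a::countable \<times> 'b::polish_space) measure \<Rightarrow> ('a \<Rightarrow> 'b measure)
    \<Rightarrow> ('a \<times> 'b measure) measure" where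
  "psi \<mu> \<kappa> = distr (marginal \<mu>) (borel_of XP_topology) (\<lambda>x. (x, \<kappa> x))"

definition weak_conv :: "'c topology \<Rightarrow> (nat \<Rightarrow> 'c measure) \<Rightarrow> 'c measure \<Rightarrow> bool" where
  "weak_conv T Ms M \<longleftrightarrow> (\<forall>g. continuous_map T euclideanreal g \<and> bounded (g ` topspace T) \<longrightarrow>
      (\<lambda>n. \<integral>z. g z \<partial>Ms n) \<longlonglongrightarrow> (\<integral>z. g z \<partial>M))"

definition tv_dist :: "('a::countable \<times> 'b::polish_space) measure \<Rightarrow> ('a \<times> 'b) measure \<Rightarrow> real" where
  "tv_dist \<nu> \<mu> = (SUP f \<in> {f \<in> borel_measurable XY_space. \<forall>z. \<bar>f z\<bar> \<le> 1}.
      (\<integral>z. f z \<partial>\<nu>) - (\<integral>z. f z \<partial>\<mu>))"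

end

theory Submission
  imports Defs
begin


lemma int_bound1:
  assumes "prob_space M" "h \<in> borel_measurable M" "\<And>z. \<bar>h z\<bar> \<le> (1::real)"
  shows "\<bar>\<integral>z. h z \<partial>M\<bar> \<le> 1"
proof -
  interpret prob_space M by fact
  have int: "integrable M h" using assms by (intro integrable_const_bound[where B=1]) auto
  have "(\<integral>z. h z \<partial>M) \<le> 1" using assms by (intro integral_le_const int) (auto simp: abs_le_iff)
  moreover have "-1 \<le> (\<integral>z. h z \<partial>M)" using assms
    by (intro integral_ge_const int) (auto simp: abs_le_iff)
  ultimately show ?thesis by auto
qed

lemma tv_bound:
  fixes M N :: "('a::countable \<times> 'b::polish_space) measure" and f :: "'a \<times> 'b \<Rightarrow> real"
  assumes M: "prob_space M" "sets M = sets XY_space" and N: "prob_space N" "sets N = sets XY_space"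
    and f: "f \<in> borel_measurable XY_space" "\<And>z. \<bar>f z\<bar> \<le> C" and C: "C > 0"
  shows "\<bar>(\<integral>z. f z \<partial>M) - (\<integral>z. f z \<partial>N)\<bar> \<le> C * tv_dist M N"
proof -
  define S where "S = {f \<in> (borel_measurable XY_space :: ('a \<times> 'b \<Rightarrow> real) set). \<forall>z. \<bar>f z\<bar> \<le> (1::real)}"
  have bM: "borel_measurable M = borel_measurable XY_space"
    using M(2) by (rule measurable_cong_sets) auto
  have bN: "borel_measurable N = borel_measurable XY_space"
    using N(2) by (rule measurable_cong_sets) auto
  have le2: "(\<integral>z. h z \<partial>M) - (\<integral>z. h z \<partial>N) \<le> 2" if "h \<in> S" for h
  proof -
    have "\<bar>\<integral>z. h z \<partial>M\<bar> \<le> 1" using that M bM by (intro int_bound1) (auto simp: S_def)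
    moreover have "\<bar>\<integral>z. h z \<partial>N\<bar> \<le> 1" using that N bN by (intro int_bound1) (auto simp: S_def)
    ultimately show ?thesis by linarith
  qed
  have bdd: "bdd_above ((\<lambda>h. (\<integral>z. h z \<partial>M) - (\<integral>z. h z \<partial>N)) ` S)"
    using le2 by (intro bdd_aboveI[where M=2]) auto
  have up: "(\<integral>z. h z \<partial>M) - (\<integral>z. h z \<partial>N) \<le> tv_dist M N" if "h \<in> S" for h
    unfolding tv_dist_def S_def[symmetric] using bdd that by (rule cSUP_upper2) auto
  have "(\<lambda>z. f z / C) \<in> S" using f C by (auto simp: S_def)
  from up[OF this] have 1: "(\<integral>z. f z \<partial>M) / C - (\<integral>z. f z \<partial>N) / C \<le> tv_dist M N" by simp
  have "(\<lambda>z. - f z / C) \<in> S" using f C by (auto simp: S_def)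
  from up[OF this] have 2: "- (\<integral>z. f z \<partial>M) / C + (\<integral>z. f z \<partial>N) / C \<le> tv_dist M N" by simp
  from 1 2 C show ?thesis by (auto simp: field_simps abs_le_iff)
qed

lemma tv_tendsto:
  fixes Ms :: "nat \<Rightarrow> ('a::countable \<times> 'b::polish_space) measure" and f :: "'a \<times> 'b \<Rightarrow> real"
  assumes Ms: "\<And>n. prob_space (Ms n)" "\<And>n. sets (Ms n) = sets XY_space"
    and N: "prob_space N" "sets N = sets XY_space"
    and tv: "(\<lambda>n. tv_dist (Ms n) N) \<longlonglongrightarrow> 0"
    and f: "f \<in> borel_measurable XY_space" "\<And>z. \<bar>f z\<bar> \<le> C"
  shows "(\<lambda>n. \<integral>z. f z \<partial>Ms n) \<longlonglongrightarrow> (\<integral>z. f z \<partial>N)"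
proof -
  define C' where "C' = max C 1"
  have C': "C' > 0" "\<And>z. \<bar>f z\<bar> \<le> C'" using f(2) by (auto simp: C'_def intro: order_trans[OF _ max.cobounded1])
  have "(\<lambda>n. (\<integral>z. f z \<partial>Ms n) - (\<integral>z. f z \<partial>N)) \<longlonglongrightarrow> 0"
  proof (rule Lim_null_comparison)
    show "\<forall>\<^sub>F n in sequentially. norm ((\<integral>z. f z \<partial>Ms n) - (\<integral>z. f z \<partial>N)) \<le> C' * tv_dist (Ms n) N"
      using tv_bound[OF Ms N f(1) C'(2) C'(1)] by simp
    show "(\<lambda>n. C' * tv_dist (Ms n) N) \<longlonglongrightarrow> 0"
      using tendsto_mult_right_zero[OF tv] by simp
  qed
  then show ?thesis by (simp add: LIM_zero_iff)
qed



lemma space_XY: "space (XY_space :: ('a::countable \<times> 'b::polish_space) measure) = UNIV"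
  by (simp add: XY_space_def space_pair_measure)

lemma marginal_singleton:
  fixes M :: "('a::countable \<times> 'b::polish_space) measure"
  assumes "sets M = sets XY_space"
  shows "measure (marginal M) {x} = measure M ({x} \<times> UNIV)"
proof -
  have sp: "space M = UNIV" using sets_eq_imp_space_eq[OF assms] space_XY by simp
  have mM: "\<And>N. measurable M N = measurable XY_space N" using assms by (intro measurable_cong_sets) auto
  have m: "fst \<in> measurable M (count_space UNIV)" by (simp add: mM XY_space_def)
  have "measure (marginal M) {x} = measure M (fst -` {x} \<inter> space M)"
    unfolding marginal_def by (rule measure_distr[OF m]) simp
  also have "fst -` {x} \<inter> space M = {x} \<times> UNIV" using sp by auto
  finally show ?thesis .
qed

lemma kappa_int:
  fixes M :: "('a::countable \<times> 'b::polish_space) measure" and h :: "'b \<Rightarrow> real"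
  assumes M: "prob_space M" "sets M = sets XY_space" and k: "is_rcd M k"
    and h: "h \<in> borel_measurable borel"
  shows "measure (marginal M) {x} * (\<integral>y. h y \<partial>k x) = (\<integral>z. indicator ({x} \<times> UNIV) z * h (snd z) \<partial>M)"
proof -
  interpret prob_space M by fact
  define c where "c = measure (marginal M) {x}"
  define S where "S = ({x} \<times> UNIV :: ('a \<times> 'b) set)"
  have c0: "c \<ge> 0" by (simp add: c_def)
  have kx: "prob_space (k x)" "sets (k x) = sets borel"
    using k by (auto simp: is_rcd_def prob_measures_def)
  have sp: "space M = UNIV" using sets_eq_imp_space_eq[OF M(2)] space_XY by simp
  have mM: "\<And>N. measurable M N = measurable XY_space N" using M(2) by (intro measurable_cong_sets) auto
  have S_sets: "S \<in> sets M" unfolding S_def M(2) XY_space_def by (rule pair_measureI) auto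
  have rect: "measure M ({x} \<times> B) = c * measure (k x) B" if B: "B \<in> sets borel" for B
  proof -
    have "measure M ({x} \<times> B) = (\<integral>a. indicator {x} a * measure (k a) B \<partial>marginal M)"
      using k B by (auto simp: is_rcd_def)
    also have "\<dots> = (\<integral>a. indicator {x} a * measure (k x) B \<partial>marginal M)"
      by (intro Bochner_Integration.integral_cong) (auto simp: indicator_def)
    also have "\<dots> = c * measure (k x) B"
      by (simp add: c_def marginal_def)
    finally show ?thesis .
  qed
  have meq: "density (k x) (\<lambda>_. ennreal c) = distr (density M (\<lambda>z. ennreal (indicator S z))) borel snd"
  proof (rule measure_eqI)
    show "sets (density (k x) (\<lambda>_. ennreal c)) = sets (distr (density M (\<lambda>z. ennreal (indicator S z))) borel snd)"
      using kx by simp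
    fix B assume "B \<in> sets (density (k x) (\<lambda>_. ennreal c))"
    then have B: "B \<in> sets borel" using kx by simp
    have msnd: "snd \<in> measurable (density M (\<lambda>z. ennreal (indicator S z))) borel"
      by (simp add: mM XY_space_def)
    have "emeasure (distr (density M (\<lambda>z. ennreal (indicator S z))) borel snd) B
        = emeasure (density M (\<lambda>z. ennreal (indicator S z))) (snd -` B \<inter> UNIV)"
      using emeasure_distr[OF msnd B] by (simp add: sp)
    also have "\<dots> = (\<integral>\<^sup>+ z. ennreal (indicator S z) * indicator (snd -` B \<inter> UNIV) z \<partial>M)"
    proof (rule emeasure_density)
      show "(\<lambda>z. ennreal (indicator S z)) \<in> borel_measurable M" using S_sets by simp
      show "snd -` B \<inter> UNIV \<in> sets M"
        using measurable_sets[of snd M borel B] B by (simp add: mM XY_space_def sp)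
    qed
    also have "\<dots> = (\<integral>\<^sup>+ z. indicator ({x} \<times> B) z \<partial>M)"
      by (intro nn_integral_cong) (auto simp: S_def indicator_def)
    also have "\<dots> = emeasure M ({x} \<times> B)"
    proof (rule nn_integral_indicator)
      show "{x} \<times> B \<in> sets M" unfolding M(2) XY_space_def using B by (intro pair_measureI) auto
    qed
    also have "\<dots> = ennreal (c * measure (k x) B)" by (simp add: emeasure_eq_measure rect[OF B])
    also have "\<dots> = emeasure (density (k x) (\<lambda>_. ennreal c)) B"
      using B kx c0 by (simp add: emeasure_density_const finite_measure.emeasure_eq_measure[OF prob_space.finite_measure[OF kx(1)]] ennreal_mult)
    finally show "emeasure (density (k x) (\<lambda>_. ennreal c)) B = emeasure (distr (density M (\<lambda>z. ennreal (indicator S z))) borel snd) B" ..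
  qed
  have hk: "h \<in> borel_measurable (k x)" using h by (simp add: measurable_cong_sets[OF kx(2) refl])
  have "c * (\<integral>y. h y \<partial>k x) = (\<integral>y. h y \<partial>density (k x) (\<lambda>_. ennreal c))"
    using integral_density[OF hk, of "\<lambda>_. c"] c0 by simp
  also have "\<dots> = (\<integral>y. h y \<partial>distr (density M (\<lambda>z. ennreal (indicator S z))) borel snd)"
    by (simp add: meq)
  also have "\<dots> = (\<integral>z. h (snd z) \<partial>density M (\<lambda>z. ennreal (indicator S z)))"
    by (rule integral_distr) (simp_all add: mM XY_space_def h)
  also have "\<dots> = (\<integral>z. indicator S z *\<^sub>R h (snd z) \<partial>M)"
  proof (rule integral_density)
    show "(\<lambda>z. h (snd z)) \<in> borel_measurable M" using h by (simp add: mM XY_space_def)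
    show "indicator S \<in> borel_measurable M" using S_sets by simp
  qed simp
  finally show ?thesis by (simp add: c_def S_def)
qed



lemma space_borel_of: "space (borel_of T) = topspace T"
  unfolding borel_of_def by (rule space_measure_of_conv)

lemma sets_borel_of: "sets (borel_of T) = sigma_sets (topspace T) {U. openin T U}"
  unfolding borel_of_def by (rule sets_measure_of) (auto dest: openin_subset)

lemma cont_borel_of:
  assumes "continuous_map T euclideanreal g"
  shows "g \<in> borel_measurable (borel_of T)"
proof (rule borel_measurableI)
  fix S :: "real set" assume "open S"
  have "openin T {x \<in> topspace T. g x \<in> S}"
    using openin_continuous_map_preimage[OF assms] \<open>open S\<close> by simp
  moreover have "g -` S \<inter> space (borel_of T) = {x \<in> topspace T. g x \<in> S}"
    by (auto simp: space_borel_of)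
  ultimately show "g -` S \<inter> space (borel_of T) \<in> sets (borel_of T)"
    by (simp add: sets_borel_of sigma_sets.Basic)
qed

lemma topspace_weak: "topspace (weak_topology :: 'b::topological_space measure topology) = prob_measures"
proof -
  have "\<Union>{{M \<in> prob_measures. (\<integral>y. g y \<partial>M) \<in> U} | g U.
          continuous_on UNIV g \<and> bounded (range g) \<and> open (U :: real set)} \<subseteq> (prob_measures :: 'b measure set)"
    by (rule Union_least) auto
  then show ?thesis unfolding weak_topology_def topology_generated_by_topspace Union_insert
    by (rule Un_absorb2)
qed

lemma topspace_XP: "topspace (XP_topology :: ('a \<times> 'b::topological_space measure) topology) = UNIV \<times> prob_measures"
  unfolding XP_topology_def by (simp add: topspace_weak)

lemma weak_limit:
  fixes a :: "nat \<Rightarrow> 'b::topological_space measure"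
  assumes a: "\<And>n. a n \<in> prob_measures" and l: "l \<in> prob_measures"
    and conv: "\<And>g :: 'b \<Rightarrow> real. continuous_on UNIV g \<Longrightarrow> bounded (range g) \<Longrightarrow>
        (\<lambda>n. \<integral>y. g y \<partial>a n) \<longlonglongrightarrow> (\<integral>y. g y \<partial>l)"
  shows "limitin weak_topology a l sequentially"
proof -
  define S :: "'b measure set set" where "S = insert prob_measures
       {{M \<in> prob_measures. (\<integral>y. g y \<partial>M) \<in> U} | g U.
          continuous_on UNIV g \<and> bounded (range g) \<and> open (U :: real set)}"
  have "generate_topology_on S U \<Longrightarrow> l \<in> U \<longrightarrow> eventually (\<lambda>n. a n \<in> U) sequentially" for U
  proof (induction rule: generate_topology_on.induct)
    case Empty then show ?case by simp
  next
    case (Int A B)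
    show ?case
    proof
      assume l: "l \<in> A \<inter> B"
      have "eventually (\<lambda>n. a n \<in> A) sequentially" using Int.IH(1) l by blast
      moreover have "eventually (\<lambda>n. a n \<in> B) sequentially" using Int.IH(2) l by blast
      ultimately show "eventually (\<lambda>n. a n \<in> A \<inter> B) sequentially" by eventually_elim blast
    qed
  next
    case (UN K)
    show ?case
    proof
      assume "l \<in> \<Union>K"
      then obtain k where "k \<in> K" "l \<in> k" by auto
      then have "eventually (\<lambda>n. a n \<in> k) sequentially" using UN.IH by blast
      then show "eventually (\<lambda>n. a n \<in> \<Union>K) sequentially"
        by eventually_elim (use \<open>k \<in> K\<close> in blast)
    qed
  next
    case (Basis s)
    show ?case
    proof
      assume ls: "l \<in> s"
      have "s = prob_measures \<or> (\<exists>g U. s = {M \<in> prob_measures. (\<integral>y. g y \<partial>M) \<in> U} \<and>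
          continuous_on UNIV g \<and> bounded (range g) \<and> open (U :: real set))"
        using Basis unfolding S_def insert_iff mem_Collect_eq .
      then show "eventually (\<lambda>n. a n \<in> s) sequentially"
      proof (elim disjE exE conjE)
        assume "s = prob_measures"
        then show ?thesis using a by simp
      next
        fix g :: "'b \<Rightarrow> real" and U :: "real set"
        assume s: "s = {M \<in> prob_measures. (\<integral>y. g y \<partial>M) \<in> U}" and g: "continuous_on UNIV g" "bounded (range g)"
          and U: "open U"
        have "(\<integral>y. g y \<partial>l) \<in> U" using ls unfolding s by blast
        from topological_tendstoD[OF conv[OF g] U this]
        show ?thesis
        proof eventually_elim
          case (elim n)
          then show ?case using a[of n] unfolding s by blast
        qed
      qed
    qed
  qed
  note gen = this
  show ?thesis unfolding limitin_def
  proof (intro conjI allI impI)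
    show "l \<in> topspace weak_topology" using l by (simp add: topspace_weak)
    fix U assume U: "openin weak_topology U \<and> l \<in> U"
    then have "generate_topology_on S U"
      unfolding weak_topology_def S_def[symmetric] openin_topology_generated_by_iff by simp
    then show "eventually (\<lambda>n. a n \<in> U) sequentially" using gen U by simp
  qed
qed



lemma kappa_conv:
  fixes \<mu>s :: "nat \<Rightarrow> ('a::countable \<times> 'b::polish_space) measure"
    and \<mu> :: "('a \<times> 'b) measure" and h :: "'b \<Rightarrow> real"
  assumes Ms: "\<And>n. prob_space (\<mu>s n)" "\<And>n. sets (\<mu>s n) = sets XY_space"
    and M: "prob_space \<mu>" "sets \<mu> = sets XY_space"
    and tv: "(\<lambda>n. tv_dist (\<mu>s n) \<mu>) \<longlonglongrightarrow> 0"
    and ks: "\<And>n. is_rcd (\<mu>s n) (\<kappa>s n)" and k: "is_rcd \<mu> \<kappa>"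
    and pos: "measure (marginal \<mu>) {x} > 0"
    and h: "h \<in> borel_measurable borel" "\<And>y. \<bar>h y\<bar> \<le> B"
  shows "(\<lambda>n. \<integral>y. h y \<partial>\<kappa>s n x) \<longlonglongrightarrow> (\<integral>y. h y \<partial>\<kappa> x)"
proof -
  define f where "f z = indicator ({x} \<times> UNIV) z * h (snd z)" for z :: "'a \<times> 'b"
  have Sx: "{x} \<times> UNIV \<in> sets (XY_space :: ('a \<times> 'b) measure)"
    unfolding XY_space_def by (rule pair_measureI) auto
  have fm: "f \<in> borel_measurable XY_space"
    unfolding f_def using Sx h(1) by (simp add: XY_space_def)
  have fb: "\<bar>f z\<bar> \<le> \<bar>B\<bar>" for z using h(2)[of "snd z"] by (auto simp: f_def indicator_def)
  have A: "(\<lambda>n. \<integral>z. f z \<partial>\<mu>s n) \<longlonglongrightarrow> (\<integral>z. f z \<partial>\<mu>)"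
    by (rule tv_tendsto[OF Ms M tv fm fb])
  have im: "indicator ({x} \<times> UNIV) \<in> (borel_measurable XY_space :: ('a \<times> 'b \<Rightarrow> real) set)"
    using Sx by simp
  have ib: "\<bar>indicator ({x} \<times> UNIV) z :: real\<bar> \<le> 1" for z by (simp add: indicator_def)
  have spn: "\<And>n. space (\<mu>s n) = UNIV" using sets_eq_imp_space_eq[OF Ms(2)] space_XY by simp
  have sp: "space \<mu> = UNIV" using sets_eq_imp_space_eq[OF M(2)] space_XY by simp
  have C: "(\<lambda>n. measure (marginal (\<mu>s n)) {x}) \<longlonglongrightarrow> measure (marginal \<mu>) {x}"
    using tv_tendsto[OF Ms M tv im ib] by (simp add: marginal_singleton Ms(2) M(2) spn sp)
  have eq: "measure (marginal (\<mu>s n)) {x} * (\<integral>y. h y \<partial>\<kappa>s n x) = (\<integral>z. f z \<partial>\<mu>s n)" for n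
    unfolding f_def by (rule kappa_int[OF Ms(1) Ms(2) ks h(1)])
  have eq0: "measure (marginal \<mu>) {x} * (\<integral>y. h y \<partial>\<kappa> x) = (\<integral>z. f z \<partial>\<mu>)"
    unfolding f_def by (rule kappa_int[OF M k h(1)])
  have D: "(\<lambda>n. (\<integral>z. f z \<partial>\<mu>s n) / measure (marginal (\<mu>s n)) {x}) \<longlonglongrightarrow> (\<integral>z. f z \<partial>\<mu>) / measure (marginal \<mu>) {x}"
    using pos by (intro tendsto_divide A C) simp
  have ev: "eventually (\<lambda>n. measure (marginal (\<mu>s n)) {x} > 0) sequentially"
    using order_tendstoD(1)[OF C pos] .
  have "eventually (\<lambda>n. (\<integral>z. f z \<partial>\<mu>s n) / measure (marginal (\<mu>s n)) {x} = (\<integral>y. h y \<partial>\<kappa>s n x)) sequentially"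
    using ev by eventually_elim (simp add: eq[symmetric])
  moreover have "(\<integral>z. f z \<partial>\<mu>) / measure (marginal \<mu>) {x} = (\<integral>y. h y \<partial>\<kappa> x)"
    using pos by (simp add: eq0[symmetric])
  ultimately show ?thesis using D by (simp add: tendsto_cong)
qed


theorem corollary6:
  fixes \<mu>s :: "nat \<Rightarrow> ('a::countable \<times> 'b::polish_space) measure"
    and \<mu> :: "('a \<times> 'b) measure"
    and \<kappa>s :: "nat \<Rightarrow> 'a \<Rightarrow> 'b measure"
    and \<kappa> :: "'a \<Rightarrow> 'b measure"
  assumes "\<And>n. prob_space (\<mu>s n)" "\<And>n. sets (\<mu>s n) = sets XY_space"
    and "prob_space \<mu>" "sets \<mu> = sets XY_space"
    and "(\<lambda>n. tv_dist (\<mu>s n) \<mu>) \<longlonglongrightarrow> 0"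
    and "\<And>n. is_rcd (\<mu>s n) (\<kappa>s n)" "is_rcd \<mu> \<kappa>"
  shows "weak_conv XP_topology (\<lambda>n. psi (\<mu>s n) (\<kappa>s n)) (psi \<mu> \<kappa>)"
  unfolding weak_conv_def
proof (intro allI impI, elim conjE)
  note Ms = assms(1,2) and M = assms(3,4) and tv = assms(5) and ks = assms(6) and k = assms(7)
  fix g :: "'a \<times> 'b measure \<Rightarrow> real"
  assume gc: "continuous_map XP_topology euclideanreal g" and gb: "bounded (g ` topspace XP_topology)"
  obtain B where B: "\<And>p. p \<in> topspace XP_topology \<Longrightarrow> \<bar>g p\<bar> \<le> B"
    using gb unfolding bounded_iff by auto
  have kp: "\<And>n x. \<kappa>s n x \<in> prob_measures" "\<And>x. \<kappa> x \<in> prob_measures"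
    using ks k by (auto simp: is_rcd_def)
  have gB: "\<bar>g (x, m)\<bar> \<le> B" if "m \<in> prob_measures" for x m
    using B[of "(x, m)"] that by (simp add: topspace_XP)
  have gm: "g \<in> borel_measurable (borel_of XP_topology)" by (rule cont_borel_of[OF gc])
  have mapm: "(\<lambda>x. (x, kk x)) \<in> measurable (marginal N) (borel_of XP_topology)"
    if "\<And>x. kk x \<in> prob_measures" for kk and N :: "('a \<times> 'b) measure"
  proof -
    have eq: "measurable (marginal N) (borel_of XP_topology) = measurable (count_space UNIV) (borel_of XP_topology)"
      by (rule measurable_cong_sets) (simp_all add: marginal_def)
    have "(\<lambda>x. (x, kk x)) \<in> measurable (count_space UNIV) (borel_of XP_topology)"
      using that by (simp add: space_borel_of topspace_XP)
    then show ?thesis unfolding eq .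
  qed
  have psi_int: "(\<integral>z. g z \<partial>psi N kk) = (\<integral>x. g (x, kk x) \<partial>marginal N)"
    if "\<And>x. kk x \<in> prob_measures" for kk and N :: "('a \<times> 'b) measure"
    unfolding psi_def by (rule integral_distr[OF mapm[OF that] gm])
  have marg_int: "(\<integral>x. F x \<partial>marginal N) = (\<integral>z. F (fst z) \<partial>N)"
    if "sets N = sets XY_space" for F :: "'a \<Rightarrow> real" and N :: "('a \<times> 'b) measure"
  proof -
    have eq: "measurable N (count_space UNIV) = measurable XY_space (count_space UNIV)"
      using that by (intro measurable_cong_sets) auto
    have "fst \<in> measurable XY_space (count_space UNIV)" by (simp add: XY_space_def)
    then have "fst \<in> measurable N (count_space UNIV)" unfolding eq .
    then show ?thesis unfolding marginal_def by (rule integral_distr) simp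
  qed
  define G where "G n x = g (x, \<kappa>s n x)" for n x
  define G0 where "G0 x = g (x, \<kappa> x)" for x
  have GB: "\<bar>G n x\<bar> \<le> B" for n x unfolding G_def using gB kp by simp
  have G0B: "\<bar>G0 x\<bar> \<le> B" for x unfolding G0_def using gB kp by simp
  define C where "C = max B 1"
  have C: "C > 0" "\<And>n z. \<bar>G n (fst z)\<bar> \<le> C" using GB by (auto simp: C_def intro: order_trans[OF _ max.cobounded1])
  have Gfm: "(\<lambda>z. G n (fst z)) \<in> borel_measurable XY_space" for n
    unfolding XY_space_def by (rule measurable_compose[OF measurable_fst]) simp
  have P1: "(\<lambda>n. (\<integral>x. G n x \<partial>marginal (\<mu>s n)) - (\<integral>x. G n x \<partial>marginal \<mu>)) \<longlonglongrightarrow> 0"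
  proof (rule Lim_null_comparison)
    show "\<forall>\<^sub>F n in sequentially. norm ((\<integral>x. G n x \<partial>marginal (\<mu>s n)) - (\<integral>x. G n x \<partial>marginal \<mu>)) \<le> C * tv_dist (\<mu>s n) \<mu>"
      using tv_bound[OF Ms(1) Ms(2) M Gfm C(2) C(1)] by (simp add: marg_int Ms(2) M(2))
    show "(\<lambda>n. C * tv_dist (\<mu>s n) \<mu>) \<longlonglongrightarrow> 0"
      using tendsto_mult_right_zero[OF tv] by simp
  qed
  have fstm: "fst \<in> measurable \<mu> (count_space UNIV)"
  proof -
    have eq: "measurable \<mu> (count_space UNIV) = measurable XY_space (count_space UNIV)"
      using M(2) by (intro measurable_cong_sets) auto
    have "fst \<in> measurable XY_space (count_space UNIV)" by (simp add: XY_space_def)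
    then show ?thesis unfolding eq .
  qed
  have pm: "prob_space (marginal \<mu>)" unfolding marginal_def
    by (rule prob_space.prob_space_distr[OF M(1) fstm])
  have bm: "F \<in> borel_measurable (marginal \<mu>)" for F :: "'a \<Rightarrow> real"
  proof -
    have eq: "measurable (marginal \<mu>) (borel :: real measure) = measurable (count_space UNIV) borel"
      by (rule measurable_cong_sets) (simp_all add: marginal_def)
    have "F \<in> measurable (count_space UNIV) borel" by simp
    then show ?thesis unfolding eq .
  qed
  have AEpos: "AE x in marginal \<mu>. x \<notin> {x. measure (marginal \<mu>) {x} = 0}"
  proof (rule AE_discrete_difference)
    show "countable {x. measure (marginal \<mu>) {x} = 0}" by simp
    fix x assume "x \<in> {x. measure (marginal \<mu>) {x} = 0}"
    then show "emeasure (marginal \<mu>) {x} = 0"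
      using finite_measure.emeasure_eq_measure[OF prob_space.finite_measure[OF pm]] by simp
    show "{x} \<in> sets (marginal \<mu>)" by (simp add: marginal_def)
  qed
  have pointwise: "(\<lambda>n. G n x) \<longlonglongrightarrow> G0 x" if pos: "measure (marginal \<mu>) {x} > 0" for x
  proof -
    have "limitin weak_topology (\<lambda>n. \<kappa>s n x) (\<kappa> x) sequentially"
    proof (rule weak_limit[OF kp(1) kp(2)])
      fix h :: "'b \<Rightarrow> real" assume hc: "continuous_on UNIV h" and hb: "bounded (range h)"
      obtain Bh where "\<And>y. \<bar>h y\<bar> \<le> Bh" using hb unfolding bounded_iff by auto
      then show "(\<lambda>n. \<integral>y. h y \<partial>\<kappa>s n x) \<longlonglongrightarrow> (\<integral>y. h y \<partial>\<kappa> x)"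
        using kappa_conv[OF Ms M tv ks k pos borel_measurable_continuous_onI[OF hc]] by blast
    qed
    then have "limitin XP_topology (\<lambda>n. (x, \<kappa>s n x)) (x, \<kappa> x) sequentially"
      unfolding XP_topology_def limitin_pairwise by (simp add: o_def)
    from continuous_map_limit[OF gc this]
    show ?thesis by (simp add: G_def G0_def o_def)
  qed
  have P2: "(\<lambda>n. \<integral>x. G n x \<partial>marginal \<mu>) \<longlonglongrightarrow> (\<integral>x. G0 x \<partial>marginal \<mu>)"
  proof (rule integral_dominated_convergence[where w="\<lambda>_. B"])
    show "G0 \<in> borel_measurable (marginal \<mu>)" by (rule bm)
    show "G n \<in> borel_measurable (marginal \<mu>)" for n by (rule bm)
    show "integrable (marginal \<mu>) (\<lambda>_. B)"
      using finite_measure.integrable_const[OF prob_space.finite_measure[OF pm]] .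
    show "AE x in marginal \<mu>. (\<lambda>n. G n x) \<longlonglongrightarrow> G0 x"
      using AEpos
    proof eventually_elim
      case (elim x)
      then have "measure (marginal \<mu>) {x} \<noteq> 0" by simp
      moreover have "measure (marginal \<mu>) {x} \<ge> 0" by (rule measure_nonneg)
      ultimately have "measure (marginal \<mu>) {x} > 0" by linarith
      then show ?case by (rule pointwise)
    qed
    show "AE x in marginal \<mu>. norm (G n x) \<le> B" for n using GB by simp
  qed
  have "(\<lambda>n. \<integral>x. G n x \<partial>marginal (\<mu>s n)) \<longlonglongrightarrow> 0 + (\<integral>x. G0 x \<partial>marginal \<mu>)"
    using tendsto_add[OF P1 P2] by simp
  then show "(\<lambda>n. \<integral>z. g z \<partial>psi (\<mu>s n) (\<kappa>s n)) \<longlonglongrightarrow> (\<integral>z. g z \<partial>psi \<mu> \<kappa>)"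
    by (simp add: psi_int kp G_def G0_def)
qed

end
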